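(* Let $1\le t_i\le t_o$ be integers and $q$ a prime power, and let $S(t_i,t_o,q)=\max\{s:\text{a linear }(t_i,t_o,s,q)\text{-AONT exists}\}$. Then there exists a $(t_i,t_o,s,q)$-AONT for every $s$ with $t_o\le s\le S(t_i,t_o,q)$.
   Context: A $(t_i,t_o,s,q)$-AONT is a $q^s\times 2s$ array over an alphabet of size $q$ (columns labelled $1,\dots,2s$) that is unbiased with respect to $\{1,\dots,s\}$, $\{s+1,\dots,2s\}$, and $I\cup J$ for every $I\subseteq\{1,\dots,s\}$ with $|I|=t_i$ and every $J\subseteq\{s+1,\dots,2s\}$ with $|J|=s-t_o$; here an $N\times k$ array is unbiased with respect to a set $D$ of columns if the rows restricted to $D$ contain every $|D|$-tuple over the alphabet exactly $N/q^{|D|}$ times. A linear $(t_i,t_o,s,q)$-AONT is the array with rows $(\mathbf{x},\mathbf{x}M^{-1})$, $\mathbf{x}\in\mathbb{F}_q^s$, for an invertible $s\times s$ matrix $M$ over $\mathbb{F}_q$, which is a $(t_i,t_o,s,q)$-AONT; equivalently $M$ is invertible and every $t_o\times t_i$ submatrix of $M$ has rank $t_i$. *)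

theory Defs
  imports Complex_Main "HOL-Library.FuncSet" "HOL-Library.Cardinality"
begin

text \<open>Arrays: rows indexed by a finite set R, columns by natural numbers
  (only columns 1..2s matter), entries in the alphabet type 'a with q = CARD('a).\<close>

definition unbiased :: "'r set \<Rightarrow> ('r \<Rightarrow> nat \<Rightarrow> 'a::finite) \<Rightarrow> nat set \<Rightarrow> bool" where
  "unbiased R A D \<longleftrightarrow>
     (\<forall>f \<in> D \<rightarrow>\<^sub>E (UNIV :: 'a set).
        real (card {r \<in> R. \<forall>c \<in> D. A r c = f c}) = real (card R) / real CARD('a) ^ card D)"

definition AONT :: "nat \<Rightarrow> nat \<Rightarrow> nat \<Rightarrow> 'r set \<Rightarrow> ('r \<Rightarrow> nat \<Rightarrow> 'a::finite) \<Rightarrow> bool" where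
  "AONT ti to s R A \<longleftrightarrow>
     finite R \<and> card R = CARD('a) ^ s \<and>
     unbiased R A {1..s} \<and> unbiased R A {s+1..2*s} \<and>
     (\<forall>I J. I \<subseteq> {1..s} \<and> card I = ti \<and> J \<subseteq> {s+1..2*s} \<and> card J = s - to
        \<longrightarrow> unbiased R A (I \<union> J))"

text \<open>The linear array with rows (x, x M^{-1}), x in F_q^s (vectors 0-indexed, x i for i < s);
  Minv is the s x s matrix M^{-1} (0-indexed entries).\<close>
definition lin_rows :: "nat \<Rightarrow> (nat \<Rightarrow> 'a) set" where
  "lin_rows s = {0..<s} \<rightarrow>\<^sub>E (UNIV :: 'a set)"

definition lin_array :: "nat \<Rightarrow> (nat \<Rightarrow> nat \<Rightarrow> 'a::field) \<Rightarrow> (nat \<Rightarrow> 'a) \<Rightarrow> nat \<Rightarrow> 'a" where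
  "lin_array s Minv x c =
     (if c \<le> s then x (c - 1) else (\<Sum>i<s. x i * Minv i (c - s - 1)))"

definition mat_inverse_pair :: "nat \<Rightarrow> (nat \<Rightarrow> nat \<Rightarrow> 'a::field) \<Rightarrow> (nat \<Rightarrow> nat \<Rightarrow> 'a) \<Rightarrow> bool" where
  "mat_inverse_pair s M N \<longleftrightarrow>
     (\<forall>i<s. \<forall>j<s. (\<Sum>k<s. M i k * N k j) = (if i = j then 1 else 0)) \<and>
     (\<forall>i<s. \<forall>j<s. (\<Sum>k<s. N i k * M k j) = (if i = j then 1 else 0))"

definition linear_AONT_exists :: "'a::{finite,field} itself \<Rightarrow> nat \<Rightarrow> nat \<Rightarrow> nat \<Rightarrow> bool" where
  "linear_AONT_exists T ti to s \<longleftrightarrow>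
     (\<exists>M Minv :: nat \<Rightarrow> nat \<Rightarrow> 'a. mat_inverse_pair s M Minv \<and>
        AONT ti to s (lin_rows s :: (nat \<Rightarrow> 'a) set) (lin_array s Minv))"

end

theory Submission
  imports Defs
begin

definition fib :: "'p set \<Rightarrow> ('l \<Rightarrow> 'p \<Rightarrow> 'a::finite) \<Rightarrow> 'l set \<Rightarrow> bool" where
  "fib P F L \<longleftrightarrow> (\<forall>f \<in> L \<rightarrow>\<^sub>E (UNIV::'a set).
      card {p\<in>P. \<forall>l\<in>L. F l p = f l} * CARD('a) ^ card L = card P)"

lemma unbiased_fib:
  "unbiased R (A :: 'r \<Rightarrow> nat \<Rightarrow> 'a::finite) D \<longleftrightarrow> fib R (\<lambda>c r. A r c) D"
proof -
  have q: "real CARD('a) ^ card D > 0" by simp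
  have "real a = real b / real CARD('a) ^ card D \<longleftrightarrow> a * CARD('a) ^ card D = b" for a b
    using q by (auto simp: field_simps simp flip: of_nat_mult of_nat_power)
  then show ?thesis unfolding unbiased_def fib_def by simp
qed

lemma fib_transfer:
  assumes phi: "bij_betw \<phi> P R" and h: "bij_betw h L D"
    and eq: "\<And>l p. l \<in> L \<Longrightarrow> p \<in> P \<Longrightarrow> F l p = G (h l) (\<phi> p)"
    and fR: "fib R (G :: _ \<Rightarrow> _ \<Rightarrow> 'a::finite) D"
  shows "fib P F L"
  unfolding fib_def
proof (intro ballI)
  fix f :: "_ \<Rightarrow> 'a" assume f: "f \<in> L \<rightarrow>\<^sub>E UNIV"
  define g where "g = restrict (\<lambda>d. f (inv_into L h d)) D"
  have "g \<in> D \<rightarrow>\<^sub>E UNIV" by (simp add: g_def)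
  with fR have c1: "card {x\<in>R. \<forall>d\<in>D. G d x = g d} * CARD('a) ^ card D = card R"
    unfolding fib_def by blast
  define S where "S = {x\<in>R. \<forall>d\<in>D. G d x = g d}"
  have hinj: "inj_on h L" and himg: "h ` L = D" using h by (auto simp: bij_betw_def)
  have set: "{p\<in>P. \<forall>l\<in>L. F l p = f l} = {p\<in>P. \<phi> p \<in> S}"
  proof (intro set_eqI iffI)
    fix p assume p: "p \<in> {p\<in>P. \<forall>l\<in>L. F l p = f l}"
    have "\<phi> p \<in> R" using p phi by (auto simp: bij_betw_def)
    moreover have "G d (\<phi> p) = g d" if d: "d \<in> D" for d
    proof -
      have l: "inv_into L h d \<in> L" "h (inv_into L h d) = d"
        using d himg by (auto intro: inv_into_into f_inv_into_f)
      then show ?thesis using p eq[of "inv_into L h d" p] d by (auto simp: g_def)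
    qed
    ultimately show "p \<in> {p\<in>P. \<phi> p \<in> S}" using p by (auto simp: S_def)
  next
    fix p assume p: "p \<in> {p\<in>P. \<phi> p \<in> S}"
    have "F l p = f l" if l: "l \<in> L" for l
    proof -
      have "h l \<in> D" using l himg by auto
      then have "G (h l) (\<phi> p) = g (h l)" using p by (auto simp: S_def)
      then show ?thesis using eq[of l p] l p hinj himg by (auto simp: g_def inv_into_f_f)
    qed
    then show "p \<in> {p\<in>P. \<forall>l\<in>L. F l p = f l}" using p by auto
  qed
  have "bij_betw \<phi> {p\<in>P. \<phi> p \<in> S} S"
  proof (rule bij_betw_subset[OF phi])
    show "{p\<in>P. \<phi> p \<in> S} \<subseteq> P" by blast
    have "S \<subseteq> \<phi> ` P" using phi unfolding S_def bij_betw_def by blast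
    then show "\<phi> ` {p\<in>P. \<phi> p \<in> S} = S" by blast
  qed
  then have "card {p\<in>P. \<phi> p \<in> S} = card S" by (rule bij_betw_same_card)
  moreover have "card L = card D" "card P = card R"
    using h phi by (auto intro: bij_betw_same_card)
  moreover have "card S * CARD('a) ^ card D = card R" using c1 unfolding S_def .
  ultimately show "card {p\<in>P. \<forall>l\<in>L. F l p = f l} * CARD('a) ^ card L = card P"
    unfolding set by metis
qed

lemma restrict_eq_PiE:
  assumes "f \<in> L \<rightarrow>\<^sub>E UNIV"
  shows "restrict g L = f \<longleftrightarrow> (\<forall>l\<in>L. g l = f l)"
proof
  assume "restrict g L = f" then show "\<forall>l\<in>L. g l = f l" by auto
next
  assume h: "\<forall>l\<in>L. g l = f l"
  have "restrict g L \<in> L \<rightarrow>\<^sub>E UNIV" by simp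
  from PiE_ext[OF this assms] h show "restrict g L = f" by simp
qed

lemma bij_fib:
  assumes fin: "finite L"
    and b: "bij_betw (\<lambda>p. restrict (\<lambda>l. F l p) L) P (L \<rightarrow>\<^sub>E (UNIV :: 'a::finite set))"
  shows "fib P F L"
  unfolding fib_def
proof (intro ballI)
  fix f :: "_ \<Rightarrow> 'a" assume f: "f \<in> L \<rightarrow>\<^sub>E UNIV"
  have 1: "{p\<in>P. \<forall>l\<in>L. F l p = f l} = {p\<in>P. restrict (\<lambda>l. F l p) L = f}"
    by (simp only: restrict_eq_PiE[OF f])
  have "f \<in> (\<lambda>p. restrict (\<lambda>l. F l p) L) ` P" using b f by (simp add: bij_betw_def)
  then obtain p where p: "p \<in> P" "restrict (\<lambda>l. F l p) L = f" by (elim imageE) simp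
  have inj: "inj_on (\<lambda>p. restrict (\<lambda>l. F l p) L) P" using b by (simp add: bij_betw_def)
  have 2: "{p\<in>P. restrict (\<lambda>l. F l p) L = f} = {p}"
  proof (intro set_eqI iffI)
    fix p' assume "p' \<in> {p\<in>P. restrict (\<lambda>l. F l p) L = f}"
    then have "p' \<in> P" "restrict (\<lambda>l. F l p') L = restrict (\<lambda>l. F l p) L" using p by auto
    then show "p' \<in> {p}" using p(1) inj by (simp add: inj_on_def)
  qed (use p in simp)
  have "card P = CARD('a) ^ card L"
    using bij_betw_same_card[OF b] fin by (simp add: card_PiE)
  then show "card {p\<in>P. \<forall>l\<in>L. F l p = f l} * CARD('a) ^ card L = card P" unfolding 1 2 by simp
qed

definition Fv :: "(nat \<Rightarrow> nat \<Rightarrow> 'a::field) \<Rightarrow> nat set \<Rightarrow> nat + nat \<Rightarrow> (nat \<Rightarrow> 'a) \<Rightarrow> 'a" where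
  "Fv M Rs l y = (case l of Inl i \<Rightarrow> \<Sum>r\<in>Rs. y r * M r i | Inr r \<Rightarrow> y r)"

definition Psi :: "(nat \<Rightarrow> nat \<Rightarrow> 'a::field) \<Rightarrow> nat set \<Rightarrow> nat set \<Rightarrow> (nat \<Rightarrow> 'a) \<Rightarrow> nat \<Rightarrow> 'a" where
  "Psi M Rs Cs y = restrict (\<lambda>i. \<Sum>r\<in>Rs. y r * M r i) Cs"

definition Good :: "(nat \<Rightarrow> nat \<Rightarrow> 'a::{finite,field}) \<Rightarrow> nat \<Rightarrow> nat \<Rightarrow> nat set \<Rightarrow> nat set \<Rightarrow> bool" where
  "Good M ti to Rs Cs \<longleftrightarrow> finite Rs \<and> finite Cs \<and> card Rs = card Cs \<and>
     bij_betw (Psi M Rs Cs) (Rs \<rightarrow>\<^sub>E UNIV) (Cs \<rightarrow>\<^sub>E UNIV) \<and>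
     (\<forall>I J. I \<subseteq> Cs \<and> card I = ti \<and> J \<subseteq> Rs \<and> card J = card Rs - to \<longrightarrow>
        fib (Rs \<rightarrow>\<^sub>E (UNIV::'a set)) (Fv M Rs) (Inl ` I \<union> Inr ` J))"

lemma card_lr: "finite I \<Longrightarrow> finite J \<Longrightarrow> card (Inl ` I \<union> Inr ` J) = card I + card J"
  by (subst card_Un_disjoint) (auto simp: card_image)

lemma card_funs: "finite A \<Longrightarrow> card (A \<rightarrow>\<^sub>E (UNIV :: 'a::finite set)) = CARD('a) ^ card A"
  by (simp add: card_PiE)

lemma sum_upd0:
  assumes "finite Rs" "r \<in> Rs"
  shows "(\<Sum>r'\<in>Rs. (y(r := 0)) r' * (M r' i :: 'a::field)) = (\<Sum>r'\<in>Rs - {r}. y r' * M r' i)"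
  using assms by (simp add: sum.remove)

lemma inj_bij_card:
  assumes "inj_on f A" "f ` A \<subseteq> B" "card A = card B" "finite B"
  shows "bij_betw f A B"
  using assms by (metis bij_betw_def card_image card_subset_eq)


lemma step_bij:
  fixes M :: "nat \<Rightarrow> nat \<Rightarrow> 'a::{finite,field}"
  assumes fin: "finite Rs" "finite Cs" and cardeq: "card Rs = card Cs"
    and b: "bij_betw (Psi M Rs Cs) (Rs \<rightarrow>\<^sub>E UNIV) (Cs \<rightarrow>\<^sub>E UNIV)"
    and c: "c \<in> Cs"
  shows "\<exists>r\<in>Rs. bij_betw (Psi M (Rs - {r}) (Cs - {c})) ((Rs - {r}) \<rightarrow>\<^sub>E UNIV) ((Cs - {c}) \<rightarrow>\<^sub>E UNIV)"
proof -
  define e :: "nat \<Rightarrow> 'a" where "e = restrict (\<lambda>i. if i = c then 1 else 0) Cs"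
  have "e \<in> Cs \<rightarrow>\<^sub>E UNIV" by (simp add: e_def)
  then have "e \<in> Psi M Rs Cs ` (Rs \<rightarrow>\<^sub>E UNIV)" using b by (simp add: bij_betw_def)
  then obtain z where z: "z \<in> Rs \<rightarrow>\<^sub>E UNIV" "Psi M Rs Cs z = e"
    by (elim imageE) simp
  have zsum: "(\<Sum>r\<in>Rs. z r * M r i) = (if i = c then 1 else 0)" if "i \<in> Cs" for i
  proof -
    have "Psi M Rs Cs z i = e i" using z(2) by simp
    then show ?thesis using that by (simp add: Psi_def e_def)
  qed
  have "\<exists>r\<in>Rs. z r \<noteq> 0"
  proof (rule ccontr)
    assume "\<not> ?thesis"
    then have "(\<Sum>r\<in>Rs. z r * M r c) = 0" by simp
    then show False using zsum[OF c] by simp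
  qed
  then obtain r where r: "r \<in> Rs" "z r \<noteq> 0" by blast
  have inj0: "inj_on (Psi M Rs Cs) (Rs \<rightarrow>\<^sub>E UNIV)" using b by (simp add: bij_betw_def)
  have inj: "inj_on (Psi M (Rs - {r}) (Cs - {c})) ((Rs - {r}) \<rightarrow>\<^sub>E UNIV)"
  proof (rule inj_onI)
    fix y1 y2 :: "nat \<Rightarrow> 'a"
    assume y1: "y1 \<in> (Rs - {r}) \<rightarrow>\<^sub>E UNIV" and y2: "y2 \<in> (Rs - {r}) \<rightarrow>\<^sub>E UNIV"
      and eq: "Psi M (Rs - {r}) (Cs - {c}) y1 = Psi M (Rs - {r}) (Cs - {c}) y2"
    have eqi: "(\<Sum>r'\<in>Rs - {r}. y1 r' * M r' i) = (\<Sum>r'\<in>Rs - {r}. y2 r' * M r' i)"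
      if "i \<in> Cs - {c}" for i
      using fun_cong[OF eq, of i] that unfolding Psi_def by simp
    define d where "d = restrict (\<lambda>r'. if r' = r then 0 else y1 r' - y2 r') Rs"
    define lam where "lam = (\<Sum>r'\<in>Rs. d r' * M r' c)"
    define w where "w = restrict (\<lambda>r'. d r' - lam * z r') Rs"
    have dsum: "(\<Sum>r'\<in>Rs. d r' * M r' i) = (\<Sum>r'\<in>Rs - {r}. y1 r' * M r' i) - (\<Sum>r'\<in>Rs - {r}. y2 r' * M r' i)" for i
    proof -
      have "(\<Sum>r'\<in>Rs. d r' * M r' i) = (\<Sum>r'\<in>Rs - {r}. d r' * M r' i)"
        using fin r by (simp add: sum.remove d_def)
      also have "\<dots> = (\<Sum>r'\<in>Rs - {r}. y1 r' * M r' i - y2 r' * M r' i)"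
        by (rule sum.cong) (auto simp: d_def algebra_simps)
      finally show ?thesis by (simp add: sum_subtractf)
    qed
    have "Psi M Rs Cs w = Psi M Rs Cs (restrict (\<lambda>_. 0) Rs)"
    proof -
      have "(\<Sum>r'\<in>Rs. w r' * M r' i) = 0" if i: "i \<in> Cs" for i
      proof -
        have "(\<Sum>r'\<in>Rs. w r' * M r' i) = (\<Sum>r'\<in>Rs. d r' * M r' i - lam * (z r' * M r' i))"
          by (rule sum.cong) (auto simp: w_def algebra_simps)
        also have "\<dots> = (\<Sum>r'\<in>Rs. d r' * M r' i) - lam * (\<Sum>r'\<in>Rs. z r' * M r' i)"
          by (simp add: sum_subtractf sum_distrib_left)
        also have "\<dots> = 0"
        proof (cases "i = c")
          case True then show ?thesis using zsum[OF c] by (simp add: lam_def)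
        next
          case False then show ?thesis using zsum[OF i] dsum[of i] eqi[of i] i by simp
        qed
        finally show ?thesis .
      qed
      then show ?thesis unfolding Psi_def by (intro ext) simp
    qed
    moreover have "w \<in> Rs \<rightarrow>\<^sub>E UNIV" "restrict (\<lambda>_. 0) Rs \<in> Rs \<rightarrow>\<^sub>E (UNIV :: 'a set)"
      by (auto simp: w_def)
    ultimately have w0: "w = restrict (\<lambda>_. 0) Rs" using inj_onD[OF inj0] by blast
    have "d r - lam * z r = 0" using fun_cong[OF w0, of r] r by (simp add: w_def)
    then have "lam = 0" using r by (simp add: d_def)
    then have "d r' = 0" if "r' \<in> Rs" for r'
      using fun_cong[OF w0, of r'] that by (simp add: w_def)
    then have "y1 r' = y2 r'" if "r' \<in> Rs - {r}" for r'
    proof -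
      have "d r' = y1 r' - y2 r'" using that by (simp add: d_def)
      then show ?thesis using \<open>\<And>r'. r' \<in> Rs \<Longrightarrow> d r' = 0\<close>[of r'] that by simp
    qed
    then show "y1 = y2" using y1 y2 by (rule PiE_ext[rotated 2]) auto
  qed
  have img: "Psi M (Rs - {r}) (Cs - {c}) ` ((Rs - {r}) \<rightarrow>\<^sub>E UNIV) \<subseteq> (Cs - {c}) \<rightarrow>\<^sub>E UNIV"
    unfolding Psi_def by (intro image_subsetI) simp
  have "card (Rs - {r}) = card (Cs - {c})"
    using fin cardeq r c by (simp add: card_Diff_singleton)
  then have ceq: "card ((Rs - {r}) \<rightarrow>\<^sub>E (UNIV :: 'a set)) = card ((Cs - {c}) \<rightarrow>\<^sub>E (UNIV :: 'a set))"
    using card_funs[of "Rs - {r}", where 'a='a] card_funs[of "Cs - {c}", where 'a='a] fin by simp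
  have "finite ((Cs - {c}) \<rightarrow>\<^sub>E (UNIV :: 'a set))" using fin by (simp add: finite_PiE)
  then have "bij_betw (Psi M (Rs - {r}) (Cs - {c})) ((Rs - {r}) \<rightarrow>\<^sub>E UNIV) ((Cs - {c}) \<rightarrow>\<^sub>E UNIV)"
    using inj_bij_card[OF inj img ceq] by blast
  then show ?thesis using r by blast
qed


lemma step_fib:
  fixes M :: "nat \<Rightarrow> nat \<Rightarrow> 'a::{finite,field}"
  assumes fin: "finite Rs" "finite Cs" and r: "r \<in> Rs" and m: "to < card Rs"
    and G: "\<forall>I J. I \<subseteq> Cs \<and> card I = ti \<and> J \<subseteq> Rs \<and> card J = card Rs - to \<longrightarrow>
        fib (Rs \<rightarrow>\<^sub>E (UNIV::'a set)) (Fv M Rs) (Inl ` I \<union> Inr ` J)"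
    and I: "I \<subseteq> Cs - {c}" "card I = ti" and J: "J \<subseteq> Rs - {r}" "card J = card (Rs - {r}) - to"
  shows "fib ((Rs - {r}) \<rightarrow>\<^sub>E (UNIV::'a set)) (Fv M (Rs - {r})) (Inl ` I \<union> Inr ` J)"
  unfolding fib_def
proof (intro ballI)
  define L' where "L' = Inl ` I \<union> Inr ` J"
  define L where "L = Inl ` I \<union> Inr ` insert r J"
  fix f :: "nat + nat \<Rightarrow> 'a" assume f: "f \<in> Inl ` I \<union> Inr ` J \<rightarrow>\<^sub>E UNIV"
  define f0 where "f0 = restrict (f(Inr r := 0)) L"
  have finI: "finite I" and finJ: "finite J" using I J fin by (auto intro: finite_subset)
  have rJ: "r \<notin> J" using J by auto
  have cJ: "card (insert r J) = card Rs - to"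
    using J finJ rJ fin r m by (simp add: card_Diff_singleton)
  have "fib (Rs \<rightarrow>\<^sub>E (UNIV::'a set)) (Fv M Rs) L"
    unfolding L_def using G I J r cJ by blast
  moreover have "f0 \<in> L \<rightarrow>\<^sub>E UNIV" by (simp add: f0_def)
  ultimately have old: "card {p \<in> Rs \<rightarrow>\<^sub>E UNIV. \<forall>l\<in>L. Fv M Rs l p = f0 l} * CARD('a) ^ card L
      = card (Rs \<rightarrow>\<^sub>E (UNIV::'a set))"
    unfolding fib_def by blast
  define New where "New = {p \<in> (Rs - {r}) \<rightarrow>\<^sub>E UNIV. \<forall>l\<in>L'. Fv M (Rs - {r}) l p = f l}"
  define Old where "Old = {p \<in> Rs \<rightarrow>\<^sub>E UNIV. \<forall>l\<in>L. Fv M Rs l p = f0 l}"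
  have Fv_upd: "Fv M Rs l (y(r := 0)) = (if l = Inr r then 0 else Fv M (Rs - {r}) l y)" for l y
  proof (cases l)
    case (Inl i) then show ?thesis using sum_upd0[OF fin(1) r, of y M i] by (simp add: Fv_def)
  next
    case (Inr r') then show ?thesis by (simp add: Fv_def)
  qed
  have inj: "inj_on (\<lambda>y. y(r := 0)) New"
  proof (rule inj_onI)
    fix y1 y2 assume y: "y1 \<in> New" "y2 \<in> New" and eq: "y1(r := 0) = y2(r := 0)"
    have "y1 r = y2 r" using y r by (auto simp: New_def PiE_def extensional_def)
    then show "y1 = y2" using eq by (metis fun_upd_triv fun_upd_upd)
  qed
  have img: "(\<lambda>y. y(r := 0)) ` New = Old"
  proof (intro set_eqI iffI)
    fix x assume "x \<in> (\<lambda>y. y(r := 0)) ` New"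
    then obtain y where y: "y \<in> New" and x: "x = y(r := 0)" by blast
    have "x \<in> Rs \<rightarrow>\<^sub>E UNIV" using y r unfolding x New_def by (auto simp: PiE_def extensional_def)
    moreover have "Fv M Rs l x = f0 l" if l: "l \<in> L" for l
    proof (cases "l = Inr r")
      case True then show ?thesis using l by (simp add: x Fv_upd f0_def)
    next
      case False
      then have "l \<in> L'" using l by (auto simp: L_def L'_def)
      then show ?thesis using False y l by (simp add: x Fv_upd f0_def New_def)
    qed
    ultimately show "x \<in> Old" by (simp add: Old_def)
  next
    fix x assume x: "x \<in> Old"
    define y where "y = restrict x (Rs - {r})"
    have xr: "x r = 0" using x by (simp add: Old_def L_def f0_def Fv_def)
    have xy: "x = y(r := 0)"
    proof
      fix k show "x k = (y(r := 0)) k"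
        using x xr by (cases "k = r") (auto simp: y_def Old_def PiE_def extensional_def)
    qed
    have "y \<in> (Rs - {r}) \<rightarrow>\<^sub>E UNIV" by (simp add: y_def)
    moreover have "Fv M (Rs - {r}) l y = f l" if l: "l \<in> L'" for l
    proof -
      have ne: "l \<noteq> Inr r" using l rJ by (auto simp: L'_def)
      have lL: "l \<in> L" using l by (auto simp: L_def L'_def)
      have "Fv M Rs l x = f0 l" using x lL by (simp add: Old_def)
      then show ?thesis using Fv_upd[of l y] ne lL by (simp add: xy[symmetric] f0_def)
    qed
    ultimately have "y \<in> New" by (simp add: New_def)
    then show "x \<in> (\<lambda>y. y(r := 0)) ` New" using xy by blast
  qed
  have cardNO: "card New = card Old" using card_image[OF inj] img by simp
  have cL: "card L = Suc (card L')"
    unfolding L_def L'_def using card_lr[OF finI finJ] card_lr[OF finI finite_insert[THEN iffD2, OF finJ]]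
      finJ rJ by simp
  have cR: "card (Rs \<rightarrow>\<^sub>E (UNIV::'a set)) = card ((Rs - {r}) \<rightarrow>\<^sub>E (UNIV::'a set)) * CARD('a)"
  proof -
    have "card Rs = Suc (card (Rs - {r}))" using card_Suc_Diff1[OF fin(1) r] by simp
    then show ?thesis using fin card_funs[of Rs, where 'a='a] card_funs[of "Rs - {r}", where 'a='a]
      by simp
  qed
  have "card New * CARD('a) ^ card L' * CARD('a) = card ((Rs - {r}) \<rightarrow>\<^sub>E (UNIV::'a set)) * CARD('a)"
    using old cardNO cL cR unfolding Old_def by (simp add: mult_ac)
  then have "card New * CARD('a) ^ card L' = card ((Rs - {r}) \<rightarrow>\<^sub>E (UNIV::'a set))"
    by simp
  then show "card {p \<in> (Rs - {r}) \<rightarrow>\<^sub>E UNIV. \<forall>l\<in>Inl ` I \<union> Inr ` J. Fv M (Rs - {r}) l p = f l} *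
      CARD('a) ^ card (Inl ` I \<union> Inr ` J) = card ((Rs - {r}) \<rightarrow>\<^sub>E (UNIV::'a set))"
    unfolding New_def L'_def .
qed


lemma step_good:
  assumes G: "Good M ti to Rs Cs" and m: "to < card Rs" and c: "c \<in> Cs"
  shows "\<exists>r\<in>Rs. Good M ti to (Rs - {r}) (Cs - {c})"
proof -
  have fin: "finite Rs" "finite Cs" and ce: "card Rs = card Cs"
    and b: "bij_betw (Psi M Rs Cs) (Rs \<rightarrow>\<^sub>E UNIV) (Cs \<rightarrow>\<^sub>E UNIV)"
    and F: "\<forall>I J. I \<subseteq> Cs \<and> card I = ti \<and> J \<subseteq> Rs \<and> card J = card Rs - to \<longrightarrow>
        fib (Rs \<rightarrow>\<^sub>E UNIV) (Fv M Rs) (Inl ` I \<union> Inr ` J)"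
    using G unfolding Good_def by auto
  obtain r where r: "r \<in> Rs" and b': "bij_betw (Psi M (Rs - {r}) (Cs - {c})) ((Rs - {r}) \<rightarrow>\<^sub>E UNIV) ((Cs - {c}) \<rightarrow>\<^sub>E UNIV)"
    using step_bij[OF fin ce b c] by blast
  have "card (Rs - {r}) = card (Cs - {c})" using fin ce r c by (simp add: card_Diff_singleton)
  moreover have "\<forall>I J. I \<subseteq> Cs - {c} \<and> card I = ti \<and> J \<subseteq> Rs - {r} \<and> card J = card (Rs - {r}) - to \<longrightarrow>
        fib ((Rs - {r}) \<rightarrow>\<^sub>E UNIV) (Fv M (Rs - {r})) (Inl ` I \<union> Inr ` J)"
  proof (intro allI impI)
    fix I J assume h: "I \<subseteq> Cs - {c} \<and> card I = ti \<and> J \<subseteq> Rs - {r} \<and> card J = card (Rs - {r}) - to"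
    show "fib ((Rs - {r}) \<rightarrow>\<^sub>E UNIV) (Fv M (Rs - {r})) (Inl ` I \<union> Inr ` J)"
      using h by (intro step_fib[OF fin r m F]) auto
  qed
  ultimately have "Good M ti to (Rs - {r}) (Cs - {c})"
    unfolding Good_def using fin b' by (intro conjI) auto
  then show ?thesis using r by blast
qed

lemma descend:
  assumes "Good M ti to Rs Cs" "to \<le> s" "s \<le> card Rs"
  shows "\<exists>Rs' Cs'. Good M ti to Rs' Cs' \<and> card Rs' = s"
  using assms
proof (induction "card Rs - s" arbitrary: Rs Cs)
  case 0
  then have "card Rs = s" by linarith
  then show ?case using 0(2) by blast
next
  case (Suc k)
  have fin: "finite Cs" "card Rs = card Cs" "finite Rs" using Suc.prems(1) unfolding Good_def by blast+
  have "card Cs > 0" using Suc.hyps(2) fin(2) by linarith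
  then have "Cs \<noteq> {}" by auto
  then obtain c where c: "c \<in> Cs" by blast
  have lt: "to < card Rs" using Suc.hyps(2) Suc.prems(2) by linarith
  obtain r where r: "r \<in> Rs" and G: "Good M ti to (Rs - {r}) (Cs - {c})"
    using step_good[OF Suc.prems(1) lt c] by blast
  have cr: "card (Rs - {r}) = card Rs - 1" using fin r by (simp add: card_Diff_singleton)
  show ?case
  proof (rule Suc.hyps(1)[OF _ G Suc.prems(2)])
    show "k = card (Rs - {r}) - s" using cr Suc.hyps(2) by linarith
    show "s \<le> card (Rs - {r})" using cr Suc.hyps(2) by linarith
  qed
qed


lemma fib_relabel:
  assumes "bij_betw h L D" "\<And>l p. l \<in> L \<Longrightarrow> p \<in> P \<Longrightarrow> F l p = G (h l) p" "fib P G D"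
  shows "fib P F L"
  using fib_transfer[OF bij_betw_id[of P] assms(1), of F G] assms(2,3) by simp

lemma init_good:
  fixes M N :: "nat \<Rightarrow> nat \<Rightarrow> 'a::{finite,field}"
  assumes inv: "mat_inverse_pair n M N"
    and A: "AONT ti to n (lin_rows n :: (nat \<Rightarrow> 'a) set) (lin_array n N)"
  shows "Good M ti to {..<n} {..<n}"
proof -
  have MN: "(\<Sum>k<n. M i k * N k j) = (if i = j then 1 else 0)" if "i < n" "j < n" for i j
    using inv that unfolding mat_inverse_pair_def by blast
  have NM: "(\<Sum>k<n. N i k * M k j) = (if i = j then 1 else 0)" if "i < n" "j < n" for i j
    using inv that unfolding mat_inverse_pair_def by blast
  define \<phi> where "\<phi> = Psi M {..<n} {..<n}"
  have bk: "(\<Sum>i<n. \<phi> y i * N i j) = y j" if hj: "j < n" for y j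
  proof -
    have "(\<Sum>i<n. \<phi> y i * N i j) = (\<Sum>i<n. \<Sum>r<n. y r * (M r i * N i j))"
      by (rule sum.cong) (auto simp: \<phi>_def Psi_def sum_distrib_right mult.assoc)
    also have "\<dots> = (\<Sum>r<n. y r * (\<Sum>i<n. M r i * N i j))"
      by (subst sum.swap) (simp add: sum_distrib_left)
    also have "\<dots> = (\<Sum>r<n. if r = j then y r else 0)"
      by (rule sum.cong) (auto simp: MN hj)
    also have "\<dots> = y j" using hj by simp
    finally show ?thesis .
  qed
  have fwd: "\<phi> (restrict (\<lambda>j. \<Sum>i<n. x i * N i j) {..<n}) = x" if x: "x \<in> {..<n} \<rightarrow>\<^sub>E UNIV" for x
  proof (rule PiE_ext[OF _ x])
    show "\<phi> (restrict (\<lambda>j. \<Sum>i<n. x i * N i j) {..<n}) \<in> {..<n} \<rightarrow>\<^sub>E UNIV"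
      by (simp add: \<phi>_def Psi_def)
    fix k assume k: "k \<in> {..<n}"
    have "\<phi> (restrict (\<lambda>j. \<Sum>i<n. x i * N i j) {..<n}) k = (\<Sum>r<n. \<Sum>i<n. x i * (N i r * M r k))"
      using k unfolding \<phi>_def Psi_def
      by (simp, intro sum.cong refl) (simp add: sum_distrib_left mult_ac)
    also have "\<dots> = (\<Sum>i<n. x i * (\<Sum>r<n. N i r * M r k))"
      by (subst sum.swap) (simp add: sum_distrib_left)
    also have "\<dots> = (\<Sum>i<n. if i = k then x i else 0)"
      by (rule sum.cong) (use k in \<open>auto simp: NM\<close>)
    also have "\<dots> = x k" using k by simp
    finally show "\<phi> (restrict (\<lambda>j. \<Sum>i<n. x i * N i j) {..<n}) k = x k" .
  qed
  have bij: "bij_betw \<phi> ({..<n} \<rightarrow>\<^sub>E UNIV) ({..<n} \<rightarrow>\<^sub>E UNIV)"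
  proof (rule bij_betw_byWitness[where f' = "\<lambda>x. restrict (\<lambda>j. \<Sum>i<n. x i * N i j) {..<n}"])
    show "\<forall>y\<in>{..<n} \<rightarrow>\<^sub>E UNIV. restrict (\<lambda>j. \<Sum>i<n. \<phi> y i * N i j) {..<n} = y"
    proof
      fix y :: "nat \<Rightarrow> 'a" assume y: "y \<in> {..<n} \<rightarrow>\<^sub>E UNIV"
      have m: "restrict (\<lambda>j. \<Sum>i<n. \<phi> y i * N i j) {..<n} \<in> {..<n} \<rightarrow>\<^sub>E UNIV" by simp
      show "restrict (\<lambda>j. \<Sum>i<n. \<phi> y i * N i j) {..<n} = y"
        by (rule PiE_ext[OF m y]) (simp add: bk)
    qed
    show "\<forall>x\<in>{..<n} \<rightarrow>\<^sub>E UNIV. \<phi> (restrict (\<lambda>j. \<Sum>i<n. x i * N i j) {..<n}) = x"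
      using fwd by blast
    show "\<phi> ` ({..<n} \<rightarrow>\<^sub>E UNIV) \<subseteq> {..<n} \<rightarrow>\<^sub>E UNIV"
      unfolding \<phi>_def Psi_def by (intro image_subsetI) simp
    show "(\<lambda>x. restrict (\<lambda>j. \<Sum>i<n. x i * N i j) {..<n}) ` ({..<n} \<rightarrow>\<^sub>E UNIV) \<subseteq> {..<n} \<rightarrow>\<^sub>E UNIV"
      by (intro image_subsetI) simp
  qed
  have lr: "lin_rows n = ({..<n} \<rightarrow>\<^sub>E (UNIV :: 'a set))"
    by (simp add: lin_rows_def atLeast0LessThan)
  have F: "fib ({..<n} \<rightarrow>\<^sub>E UNIV) (Fv M {..<n}) (Inl ` I \<union> Inr ` J)"
    if IJ: "I \<subseteq> {..<n}" "card I = ti" "J \<subseteq> {..<n}" "card J = n - to" for I J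
  proof -
    define h where "h l = (case l of Inl i \<Rightarrow> Suc i | Inr r \<Rightarrow> r + n + 1)" for l
    define D where "D = Suc ` I \<union> (\<lambda>r. r + n + 1) ` J"
    have un: "unbiased (lin_rows n) (lin_array n N) D"
    proof -
      have "Suc ` I \<subseteq> {1..n}" "card (Suc ` I) = ti" using IJ by (auto simp: card_image)
      moreover have "(\<lambda>r. r + n + 1) ` J \<subseteq> {n+1..2*n}" "card ((\<lambda>r. r + n + 1) ` J) = n - to"
      proof -
        have "inj_on (\<lambda>r. r + n + 1) J" by (simp add: inj_on_def)
        then show "(\<lambda>r. r + n + 1) ` J \<subseteq> {n+1..2*n}" "card ((\<lambda>r. r + n + 1) ` J) = n - to"
          using IJ by (auto simp: card_image)
      qed
      ultimately show ?thesis using A unfolding AONT_def D_def by blast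
    qed
    then have fD: "fib (lin_rows n) (\<lambda>c x. lin_array n N x c) D" by (simp add: unbiased_fib)
    have hinj: "inj_on h (Inl ` I \<union> Inr ` J)"
      unfolding inj_on_def h_def using IJ by auto
    have himg: "h ` (Inl ` I \<union> Inr ` J) = D"
      unfolding D_def h_def image_Un image_image by simp
    have hb: "bij_betw h (Inl ` I \<union> Inr ` J) D" using hinj himg by (simp add: bij_betw_def)
    show ?thesis
    proof (rule fib_transfer[OF _ hb _ fD])
      show "bij_betw \<phi> ({..<n} \<rightarrow>\<^sub>E UNIV) (lin_rows n)" using bij lr by simp
      fix l y assume l: "l \<in> Inl ` I \<union> Inr ` J" and y: "y \<in> {..<n} \<rightarrow>\<^sub>E (UNIV :: 'a set)"
      show "Fv M {..<n} l y = lin_array n N (\<phi> y) (h l)"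
      proof (cases l)
        case (Inl i)
        then have "i < n" using l IJ by auto
        then show ?thesis using Inl by (simp add: Fv_def h_def lin_array_def \<phi>_def Psi_def)
      next
        case (Inr r)
        then have "r < n" using l IJ by auto
        then show ?thesis using Inr bk[of r y] by (simp add: Fv_def h_def lin_array_def)
      qed
    qed
  qed
  show ?thesis unfolding Good_def
    using bij F by (simp add: \<phi>_def)
qed


theorem mainTheorem18:
  fixes ti to s s' :: nat
  assumes "1 \<le> ti" and "ti \<le> to"
    and "linear_AONT_exists TYPE('a::{finite,field}) ti to s'"
    and "to \<le> s" and "s \<le> s'"
  shows "\<exists>A :: nat \<Rightarrow> nat \<Rightarrow> 'a. AONT ti to s {..<CARD('a) ^ s} A"
proof -
  obtain M N :: "nat \<Rightarrow> nat \<Rightarrow> 'a" where inv: "mat_inverse_pair s' M N"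
    and A0: "AONT ti to s' (lin_rows s' :: (nat \<Rightarrow> 'a) set) (lin_array s' N)"
    using assms(3) unfolding linear_AONT_exists_def by blast
  have G0: "Good M ti to {..<s'} {..<s'}" by (rule init_good[OF inv A0])
  have "s \<le> card {..<s'}" using assms(5) by simp
  then obtain Rs Cs where G: "Good M ti to Rs Cs" and cs: "card Rs = s"
    using descend[OF G0 assms(4)] by blast
  have finR: "finite Rs" and finC: "finite Cs" and cC: "card Cs = s"
    and bPsi: "bij_betw (Psi M Rs Cs) (Rs \<rightarrow>\<^sub>E UNIV) (Cs \<rightarrow>\<^sub>E UNIV)"
    and GF: "\<forall>I J. I \<subseteq> Cs \<and> card I = ti \<and> J \<subseteq> Rs \<and> card J = card Rs - to \<longrightarrow>
        fib (Rs \<rightarrow>\<^sub>E (UNIV::'a set)) (Fv M Rs) (Inl ` I \<union> Inr ` J)"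
    using G cs unfolding Good_def by auto
  obtain e1 where e1: "bij_betw e1 {0..<s} Cs" using ex_bij_betw_nat_finite[OF finC] cC by blast
  obtain e2 where e2: "bij_betw e2 {0..<s} Rs" using ex_bij_betw_nat_finite[OF finR] cs by blast
  define P where "P = Rs \<rightarrow>\<^sub>E (UNIV :: 'a set)"
  have finP: "finite P" unfolding P_def using finR by (simp add: finite_PiE)
  have cP: "card P = CARD('a) ^ s" unfolding P_def using card_funs[OF finR, where 'a='a] cs by simp
  obtain g where g: "bij_betw g {..<CARD('a) ^ s} P"
    using ex_bij_betw_nat_finite[OF finP] cP by (metis atLeast0LessThan)
  define h where "h c = (if c \<le> s then Inl (e1 (c - 1)) else Inr (e2 (c - s - 1)))" for c
  define A where "A k c = Fv M Rs (h c) (g k)" for k c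
  have hinj: "inj_on h {1..2*s}"
  proof (rule inj_onI)
    fix a b assume a: "a \<in> {1..2*s}" and b: "b \<in> {1..2*s}" and eq: "h a = h b"
    show "a = b"
    proof (cases "a \<le> s")
      case True
      then have bs: "b \<le> s" using eq by (cases "b \<le> s") (auto simp: h_def)
      have "e1 (a - 1) = e1 (b - 1)" using eq True bs by (simp add: h_def)
      moreover have "a - 1 \<in> {0..<s}" "b - 1 \<in> {0..<s}" using a b True bs by auto
      ultimately have "a - 1 = b - 1" using e1 by (auto simp: bij_betw_def inj_on_def)
      then show ?thesis using a b by auto
    next
      case False
      then have bs: "\<not> b \<le> s" using eq by (cases "b \<le> s") (auto simp: h_def)
      have "e2 (a - s - 1) = e2 (b - s - 1)" using eq False bs by (simp add: h_def)
      moreover have "a - s - 1 \<in> {0..<s}" "b - s - 1 \<in> {0..<s}" using a b False bs by auto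
      ultimately have "a - s - 1 = b - s - 1" using e2 by (auto simp: bij_betw_def inj_on_def)
      then show ?thesis using a b False bs by simp
    qed
  qed
  have key: "unbiased {..<CARD('a) ^ s} A D"
    if D: "D \<subseteq> {1..2*s}" and fD: "fib P (Fv M Rs) (h ` D)" for D
  proof -
    have hb: "bij_betw h D (h ` D)" using inj_on_subset[OF hinj D] by (simp add: bij_betw_def)
    have "fib {..<CARD('a) ^ s} (\<lambda>c k. A k c) D"
      by (rule fib_transfer[OF g hb _ fD]) (simp add: A_def)
    then show ?thesis by (simp add: unbiased_fib)
  qed
  have in1: "unbiased {..<CARD('a) ^ s} A {1..s}"
  proof (rule key)
    show "{1..s} \<subseteq> {1..2*s}" by auto
    have img: "h ` {1..s} = Inl ` Cs"
    proof (intro set_eqI iffI)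
      fix l assume "l \<in> h ` {1..s}"
      then obtain c where c: "c \<in> {1..s}" "l = h c" by blast
      then have "e1 (c - 1) \<in> Cs" using e1 by (auto simp: bij_betw_def)
      then show "l \<in> Inl ` Cs" using c by (simp add: h_def)
    next
      fix l :: "nat + nat" assume "l \<in> Inl ` Cs"
      then obtain x where x: "x \<in> Cs" "l = Inl x" by blast
      then obtain j where j: "j \<in> {0..<s}" "x = e1 j" using e1 by (auto simp: bij_betw_def)
      then have "h (Suc j) = l" using x by (simp add: h_def)
      moreover have "Suc j \<in> {1..s}" using j by auto
      ultimately show "l \<in> h ` {1..s}" by blast
    qed
    have bp: "bij_betw (\<lambda>p. restrict (\<lambda>i. Fv M Rs (Inl i) p) Cs) P (Cs \<rightarrow>\<^sub>E UNIV)"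
      using bPsi unfolding P_def by (rule bij_betw_cong[THEN iffD1, rotated]) (simp add: Psi_def Fv_def)
    have f1: "fib P (\<lambda>i p. Fv M Rs (Inl i) p) Cs" by (rule bij_fib[OF finC bp])
    have bl: "bij_betw projl (Inl ` Cs) Cs" by (auto simp: bij_betw_def inj_on_def image_image)
    have "fib P (Fv M Rs) (Inl ` Cs)"
      by (rule fib_relabel[OF bl _ f1]) auto
    then show "fib P (Fv M Rs) (h ` {1..s})" using img by simp
  qed
  have out1: "unbiased {..<CARD('a) ^ s} A {s+1..2*s}"
  proof (rule key)
    show "{s+1..2*s} \<subseteq> {1..2*s}" by auto
    have img: "h ` {s+1..2*s} = Inr ` Rs"
    proof (intro set_eqI iffI)
      fix l assume "l \<in> h ` {s+1..2*s}"
      then obtain c where c: "c \<in> {s+1..2*s}" "l = h c" by blast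
      then have "e2 (c - s - 1) \<in> Rs" using e2 by (auto simp: bij_betw_def)
      then show "l \<in> Inr ` Rs" using c by (simp add: h_def)
    next
      fix l :: "nat + nat" assume "l \<in> Inr ` Rs"
      then obtain x where x: "x \<in> Rs" "l = Inr x" by blast
      then obtain j where j: "j \<in> {0..<s}" "x = e2 j" using e2 by (auto simp: bij_betw_def)
      then have "h (j + s + 1) = l" using x by (simp add: h_def)
      moreover have "j + s + 1 \<in> {s+1..2*s}" using j by auto
      ultimately show "l \<in> h ` {s+1..2*s}" by blast
    qed
    have bp: "bij_betw (\<lambda>p. restrict (\<lambda>r. p r) Rs) P (Rs \<rightarrow>\<^sub>E UNIV)"
      unfolding P_def by (rule bij_betw_cong[THEN iffD1, OF _ bij_betw_id]) simp
    have f1: "fib P (\<lambda>r p. p r) Rs" by (rule bij_fib[OF finR bp])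
    have bl: "bij_betw projr (Inr ` Rs) Rs" by (auto simp: bij_betw_def inj_on_def image_image)
    have "fib P (Fv M Rs) (Inr ` Rs)"
      by (rule fib_relabel[OF bl _ f1]) (auto simp: Fv_def)
    then show "fib P (Fv M Rs) (h ` {s+1..2*s})" using img by simp
  qed
  have mix: "unbiased {..<CARD('a) ^ s} A (I \<union> J)"
    if IJ: "I \<subseteq> {1..s}" "card I = ti" "J \<subseteq> {s+1..2*s}" "card J = s - to" for I J
  proof (rule key)
    show "I \<union> J \<subseteq> {1..2*s}" using IJ by auto
    define I' where "I' = (\<lambda>c. e1 (c - 1)) ` I"
    define J' where "J' = (\<lambda>c. e2 (c - s - 1)) ` J"
    have hI: "h ` I = Inl ` I'" unfolding I'_def image_image
      by (rule image_cong[OF refl]) (use IJ in \<open>auto simp: h_def\<close>)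
    have hJ: "h ` J = Inr ` J'" unfolding J'_def image_image
      by (rule image_cong[OF refl]) (use IJ in \<open>auto simp: h_def\<close>)
    have "I \<subseteq> {1..2*s}" using IJ by auto
    then have "card (h ` I) = card I" using inj_on_subset[OF hinj] by (intro card_image) blast
    then have cI: "card I' = ti" using hI IJ by (simp add: card_image)
    have "J \<subseteq> {1..2*s}" using IJ by auto
    then have "card (h ` J) = card J" using inj_on_subset[OF hinj] by (intro card_image) blast
    then have cJ: "card J' = s - to" using hJ IJ by (simp add: card_image)
    have sI: "I' \<subseteq> Cs" unfolding I'_def
    proof (intro image_subsetI)
      fix c assume "c \<in> I"
      then have "c \<in> {1..s}" using IJ by blast
      then have "c - 1 \<in> {0..<s}" by auto
      then show "e1 (c - 1) \<in> Cs" using e1 by (auto simp: bij_betw_def)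
    qed
    have sJ: "J' \<subseteq> Rs" unfolding J'_def
    proof (intro image_subsetI)
      fix c assume "c \<in> J"
      then have "c \<in> {s+1..2*s}" using IJ by blast
      then have "c - s - 1 \<in> {0..<s}" by auto
      then show "e2 (c - s - 1) \<in> Rs" using e2 by (auto simp: bij_betw_def)
    qed
    have "fib P (Fv M Rs) (Inl ` I' \<union> Inr ` J')" using GF sI sJ cI cJ cs unfolding P_def by blast
    then show "fib P (Fv M Rs) (h ` (I \<union> J))" by (simp add: image_Un hI hJ)
  qed
  have "AONT ti to s {..<CARD('a) ^ s} A"
    unfolding AONT_def using in1 out1 mix by auto
  then show ?thesis by blast
qed

end
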